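(* Let $p/q$ be an even rational parameter, $\omega=p+q$, and let $\alpha$ be the unique integer in $(0,\omega/2)$ with $2\alpha p\equiv \pm1 \pmod \omega$. For $k=0,1,\dots,(\omega-1)/2$, the lines of $\mathcal V$ of capacity $2k$ are the lines $x=n$ with $n\equiv k\alpha$ or $n\equiv \omega-k\alpha\pmod\omega$, and the lines of $\mathcal H$ of capacity $2k$ are the lines $y=n$ with $n\equiv k\alpha$ or $n\equiv\omega-k\alpha \pmod \omega$. For every odd integer $k$ with $1\le k\le \omega$, the lines of $\mathcal P$ and of $\mathcal Q$ of mass $k$ have $y$-intercept $(0,n)$ with $n\equiv k\alpha$ or $n\equiv \omega-k\alpha\pmod\omega$.
   Context: An even rational parameter is a rational $p/q\in(0,1)$, $p,q$ positive coprime integers, with $pq$ even. Put $\omega=p+q$, $P=2p/\omega$, $Q=2q/\omega$. Families of lines: $\mathcal H$ = horizontal lines $y=n$, $\mathcal V$ = vertical lines $x=n$ ($n\in\mathbb Z$), $\mathcal P$ = lines of slope $-P$ with integer $y$-intercept, $\mathcal Q$ = lines of slope $-Q$ with integer $y$-intercept. Functions mod $2\mathbb Z$, with values represented in $(-1,1]$: $F_H(x,y)=2Py$, $F_V(x,y)=2Px$, $F_P(x,y)=Py+P^2x+1$, $F_Q(x,y)=Py+PQx+1$. Each of these functions is constant on each line of the corresponding family. For a line $L$ in $\mathcal H$ (resp. $\mathcal V$) its capacity is $|\omega F_H(L)|$ (resp. $|\omega F_V(L)|$); for a line $L$ in $\mathcal P$ (resp. $\mathcal Q$) its mass is $|\omega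 F_P(L)|$ (resp. $|\omega F_Q(L)|$). (The number $\tau=\alpha/\omega$ is called the tune, so $k\alpha=k\tau\omega$.) *)

theory Defs
  imports Complex_Main "HOL-Number_Theory.Cong"
begin

definition even_rational_param :: "nat \<Rightarrow> nat \<Rightarrow> bool" where
  "even_rational_param p q \<longleftrightarrow> 0 < p \<and> p < q \<and> coprime p q \<and> even (p * q)"

definition omega :: "nat \<Rightarrow> nat \<Rightarrow> int" where
  "omega p q = int p + int q"

definition PP :: "nat \<Rightarrow> nat \<Rightarrow> real" where
  "PP p q = 2 * real p / real (p + q)"

definition QQ :: "nat \<Rightarrow> nat \<Rightarrow> real" where
  "QQ p q = 2 * real q / real (p + q)"

text \<open>Representative in (-1,1] of a real number modulo 2.\<close>
definition rep2 :: "real \<Rightarrow> real" where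
  "rep2 t = t - 2 * of_int \<lceil>(t - 1) / 2\<rceil>"

definition F_H :: "nat \<Rightarrow> nat \<Rightarrow> real \<Rightarrow> real \<Rightarrow> real" where
  "F_H p q x y = rep2 (2 * PP p q * y)"

definition F_V :: "nat \<Rightarrow> nat \<Rightarrow> real \<Rightarrow> real \<Rightarrow> real" where
  "F_V p q x y = rep2 (2 * PP p q * x)"

definition F_P :: "nat \<Rightarrow> nat \<Rightarrow> real \<Rightarrow> real \<Rightarrow> real" where
  "F_P p q x y = rep2 (PP p q * y + (PP p q)\<^sup>2 * x + 1)"

definition F_Q :: "nat \<Rightarrow> nat \<Rightarrow> real \<Rightarrow> real \<Rightarrow> real" where
  "F_Q p q x y = rep2 (PP p q * y + PP p q * QQ p q * x + 1)"

definition hline :: "int \<Rightarrow> (real \<times> real) set" where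
  "hline n = {(x, y). y = of_int n}"
definition vline :: "int \<Rightarrow> (real \<times> real) set" where
  "vline n = {(x, y). x = of_int n}"
definition pline :: "nat \<Rightarrow> nat \<Rightarrow> int \<Rightarrow> (real \<times> real) set" where
  "pline p q n = {(x, y). y = of_int n - PP p q * x}"
definition qline :: "nat \<Rightarrow> nat \<Rightarrow> int \<Rightarrow> (real \<times> real) set" where
  "qline p q n = {(x, y). y = of_int n - QQ p q * x}"

text \<open>Capacity / mass of a line: |omega * F(z)| for a point z on the line
  (the functions are constant on the lines; we pick a point via SOME).\<close>
definition capacity_H :: "nat \<Rightarrow> nat \<Rightarrow> int \<Rightarrow> real" where
  "capacity_H p q n = (let z = (SOME z. z \<in> hline n) in
     \<bar>of_int (omega p q) * F_H p q (fst z) (snd z)\<bar>)"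
definition capacity_V :: "nat \<Rightarrow> nat \<Rightarrow> int \<Rightarrow> real" where
  "capacity_V p q n = (let z = (SOME z. z \<in> vline n) in
     \<bar>of_int (omega p q) * F_V p q (fst z) (snd z)\<bar>)"
definition mass_P :: "nat \<Rightarrow> nat \<Rightarrow> int \<Rightarrow> real" where
  "mass_P p q n = (let z = (SOME z. z \<in> pline p q n) in
     \<bar>of_int (omega p q) * F_P p q (fst z) (snd z)\<bar>)"
definition mass_Q :: "nat \<Rightarrow> nat \<Rightarrow> int \<Rightarrow> real" where
  "mass_Q p q n = (let z = (SOME z. z \<in> qline p q n) in
     \<bar>of_int (omega p q) * F_Q p q (fst z) (snd z)\<bar>)"

end

theory Submission
  imports Defs
begin


lemma rep2_int:
  fixes N w :: int assumes w: "w > 0"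
  shows "\<exists>m::int. real_of_int w * rep2 (of_int N / of_int w) = of_int m \<and> -w < m \<and> m \<le> w \<and> (2*w) dvd (N - m)"
proof -
  define x where "x = ((of_int N / of_int w - 1) / 2 :: real)"
  define c where "c = \<lceil>x\<rceil>"
  have h1: "of_int c - 1 < x" unfolding c_def by linarith
  have h2: "x \<le> of_int c" unfolding c_def by (rule le_of_int_ceiling)
  have wr: "real_of_int w > 0" using w by simp
  have e1: "2 * real_of_int w * (of_int c - 1) < of_int N - of_int w"
  proof -
    have "2 * (of_int c - 1) < (of_int N / of_int w - 1 :: real)" using h1 unfolding x_def by simp
    then have "2 * (of_int c - 1) * real_of_int w < (of_int N / of_int w - 1) * real_of_int w"
      using wr by (simp add: mult_strict_right_mono)
    moreover have "(of_int N / of_int w - 1) * real_of_int w = of_int N - of_int w" using wr by (simp add: field_simps)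
    ultimately show ?thesis by (simp add: algebra_simps)
  qed
  have e2: "of_int N - of_int w \<le> 2 * real_of_int w * of_int c"
  proof -
    have "(of_int N / of_int w - 1 :: real) \<le> 2 * of_int c" using h2 unfolding x_def by simp
    then have "(of_int N / of_int w - 1) * real_of_int w \<le> 2 * of_int c * real_of_int w"
      using wr by (simp add: mult_right_mono)
    moreover have "(of_int N / of_int w - 1) * real_of_int w = of_int N - of_int w" using wr by (simp add: field_simps)
    ultimately show ?thesis by (simp add: algebra_simps)
  qed
  have "real_of_int (2 * w * (c - 1)) < real_of_int (N - w)" using e1 by simp
  then have i1: "2 * w * (c - 1) < N - w" by (simp only: of_int_less_iff)
  have "real_of_int (N - w) \<le> real_of_int (2 * w * c)" using e2 by simp
  then have i2: "N - w \<le> 2 * w * c" by (simp only: of_int_le_iff)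
  have eq: "real_of_int w * rep2 (of_int N / of_int w) = of_int (N - 2*w*c)"
    unfolding rep2_def c_def[symmetric] x_def[symmetric] using wr by (simp add: field_simps)
  show ?thesis
    by (rule exI[of _ "N - 2*w*c"]) (use eq i1 i2 in \<open>auto simp: algebra_simps\<close>)
qed

lemma uniq2w:
  fixes a b w :: int
  assumes "-w < a" "a \<le> w" "-w < b" "b \<le> w" "(2*w) dvd (a - b)"
  shows "a = b"
proof -
  obtain j where j: "a - b = 2*w*j" using assms(5) by auto
  have w: "w > 0" using assms by linarith
  consider "j = 0" | "j \<ge> 1" | "j \<le> -1" by linarith
  then show ?thesis
  proof cases
    case 2
    then have "2*w*j \<ge> 2*w*1" using w by (intro mult_left_mono) auto
    then show ?thesis using j assms by linarith
  next
    case 3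
    then have "2*w*j \<le> 2*w*(-1)" using w by (intro mult_left_mono) auto
    then show ?thesis using j assms by linarith
  qed (use j in simp)
qed

lemma capA:
  fixes w p n \<alpha> e t k m :: int
  assumes w: "w > 0" and t: "2*\<alpha>*p = e + w*t" and e: "e = 1 \<or> e = -1"
    and k: "0 \<le> k" "2*k < w" and m: "-w < m" "m \<le> w" "(2*w) dvd (4*p*n - m)"
  shows "\<bar>m\<bar> = 2*k \<longleftrightarrow> w dvd (n - k*\<alpha>) \<or> w dvd (n - (w - k*\<alpha>))"
proof
  assume "\<bar>m\<bar> = 2*k"
  then obtain s where s: "s = 1 \<or> s = -1" "m = 2*k*s" 
  proof (cases "m \<ge> 0")
    case True
    then have "m = 2*k*1" using \<open>\<bar>m\<bar> = 2*k\<close> by linarith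
    then show ?thesis by (rule that[rotated]) simp
  next
    case False
    then have "m = 2*k*(-1)" using \<open>\<bar>m\<bar> = 2*k\<close> by linarith
    then show ?thesis by (rule that[rotated]) simp
  qed
  obtain v where v: "4*p*n - m = 2*w*v" using m(3) by auto
  have "2*p*n = k*s + w*v" using v s by (simp add: algebra_simps)
  from arg_cong[where f="\<lambda>x. \<alpha>*x", OF this] have "2*\<alpha>*p*n = k*s*\<alpha> + w*v*\<alpha>" by (simp add: algebra_simps)
  then have "(e + w*t)*n = k*s*\<alpha> + w*v*\<alpha>" using t by simp
  then have "e*n = k*s*\<alpha> + w*(v*\<alpha> - t*n)" by (simp add: algebra_simps)
  from arg_cong[where f="\<lambda>x. e*x", OF this] have "e*e*n = e*k*s*\<alpha> + w*(e*(v*\<alpha> - t*n))" by (simp add: algebra_simps)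
  then have nn: "n = e*s*k*\<alpha> + w*(e*(v*\<alpha> - t*n))" using e by (auto simp: algebra_simps)
  from e s(1) have "e*s = 1 \<or> e*s = -1" by auto
  then show "w dvd (n - k*\<alpha>) \<or> w dvd (n - (w - k*\<alpha>))"
  proof
    assume "e*s = 1"
    then have "n - k*\<alpha> = w*(e*(v*\<alpha> - t*n))" using nn by (simp add: algebra_simps)
    then show ?thesis by (metis dvd_triv_left)
  next
    assume "e*s = -1"
    then have "n - (w - k*\<alpha>) = w*(e*(v*\<alpha> - t*n) - 1)" using nn by (simp add: algebra_simps)
    then show ?thesis by (metis dvd_triv_left)
  qed
next
  assume "w dvd (n - k*\<alpha>) \<or> w dvd (n - (w - k*\<alpha>))"
  then obtain s u where s: "s = 1 \<or> s = -1" and u: "n = s*k*\<alpha> + w*u"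
  proof
    assume "w dvd (n - k*\<alpha>)"
    then obtain u where "n - k*\<alpha> = w*u" by auto
    then show thesis using that[of 1 u] by (simp add: algebra_simps)
  next
    assume "w dvd (n - (w - k*\<alpha>))"
    then obtain u where "n - (w - k*\<alpha>) = w*u" by auto
    then show thesis using that[of "-1" "u+1"] by (simp add: algebra_simps)
  qed
  have "4*p*n = 2*s*k*(2*\<alpha>*p) + 2*w*(2*p*u)" using u by (simp add: algebra_simps)
  also have "\<dots> = 2*s*k*e + 2*w*(s*k*t + 2*p*u)" using t by (simp add: algebra_simps)
  finally have "(2*w) dvd (4*p*n - 2*s*k*e)" by (metis add_diff_cancel_left' dvd_triv_left)
  moreover have "m - 2*s*k*e = (4*p*n - 2*s*k*e) - (4*p*n - m)" by simp
  ultimately have d: "(2*w) dvd (m - 2*s*k*e)" using m(3) by (simp only:) (rule dvd_diff)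
  have se: "s*e = 1 \<or> s*e = -1" using s e by auto
  have eqk: "2*s*k*e = 2*k*(s*e)" by (simp add: algebra_simps)
  have ske2: "2*s*k*e = 2*k \<or> 2*s*k*e = -(2*k)" unfolding eqk using se by (elim disjE) simp_all
  have r: "-w < 2*s*k*e" "2*s*k*e \<le> w" using ske2 k by (elim disjE; linarith)+
  have "m = 2*s*k*e" by (rule uniq2w[OF m(1,2) r d])
  then have "m = 2*k \<or> m = -(2*k)" using ske2 by metis
  then show "\<bar>m\<bar> = 2*k" using k by arith
qed


lemma massA:
  fixes w p n \<alpha> e t k m :: int
  assumes w: "w > 0" "odd w" and t: "2*\<alpha>*p = e + w*t" and e: "e = 1 \<or> e = -1"
    and k: "odd k" "1 \<le> k" "k \<le> w" and m: "-w < m" "m \<le> w" "(2*w) dvd (2*p*n + w - m)"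
  shows "\<bar>m\<bar> = k \<longleftrightarrow> w dvd (n - k*\<alpha>) \<or> w dvd (n - (w - k*\<alpha>))"
proof
  assume "\<bar>m\<bar> = k"
  then obtain s where s: "s = 1 \<or> s = -1" "m = k*s"
  proof (cases "m \<ge> 0")
    case True
    then have "m = k*1" using \<open>\<bar>m\<bar> = k\<close> by linarith
    then show ?thesis by (rule that[rotated]) simp
  next
    case False
    then have "m = k*(-1)" using \<open>\<bar>m\<bar> = k\<close> by linarith
    then show ?thesis by (rule that[rotated]) simp
  qed
  obtain v where v: "2*p*n + w - m = 2*w*v" using m(3) by auto
  have "2*p*n = k*s + w*(2*v - 1)" using v s by (simp add: algebra_simps)
  from arg_cong[where f="\<lambda>x. \<alpha>*x", OF this] have "2*\<alpha>*p*n = k*s*\<alpha> + w*(2*v-1)*\<alpha>" by (simp add: algebra_simps)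
  then have "(e + w*t)*n = k*s*\<alpha> + w*(2*v-1)*\<alpha>" using t by simp
  then have "e*n = k*s*\<alpha> + w*((2*v-1)*\<alpha> - t*n)" by (simp add: algebra_simps)
  from arg_cong[where f="\<lambda>x. e*x", OF this] have "e*e*n = e*k*s*\<alpha> + w*(e*((2*v-1)*\<alpha> - t*n))" by (simp add: algebra_simps)
  then have nn: "n = e*s*k*\<alpha> + w*(e*((2*v-1)*\<alpha> - t*n))" using e by (auto simp: algebra_simps)
  from e s(1) have "e*s = 1 \<or> e*s = -1" by auto
  then show "w dvd (n - k*\<alpha>) \<or> w dvd (n - (w - k*\<alpha>))"
  proof
    assume "e*s = 1"
    then have "n - k*\<alpha> = w*(e*((2*v-1)*\<alpha> - t*n))" using nn by (simp add: algebra_simps)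
    then show ?thesis by (metis dvd_triv_left)
  next
    assume "e*s = -1"
    then have "n - (w - k*\<alpha>) = w*(e*((2*v-1)*\<alpha> - t*n) - 1)" using nn by (simp add: algebra_simps)
    then show ?thesis by (metis dvd_triv_left)
  qed
next
  assume "w dvd (n - k*\<alpha>) \<or> w dvd (n - (w - k*\<alpha>))"
  then obtain s u where s: "s = 1 \<or> s = -1" and u: "n = s*k*\<alpha> + w*u"
  proof
    assume "w dvd (n - k*\<alpha>)"
    then obtain u where "n - k*\<alpha> = w*u" by auto
    then show thesis using that[of 1 u] by (simp add: algebra_simps)
  next
    assume "w dvd (n - (w - k*\<alpha>))"
    then obtain u where "n - (w - k*\<alpha>) = w*u" by auto
    then show thesis using that[of "-1" "u+1"] by (simp add: algebra_simps)
  qed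
  have "e + w*t = 2*(\<alpha>*p)" using t by simp
  then have "even (e + w*t)" by simp
  then have todd: "odd t" using e w(2) by auto
  have "odd (s*k*t)" using s k(1) todd by auto
  then have "even (s*k*t + 2*p*u + 1)" by simp
  then obtain r where r: "s*k*t + 2*p*u + 1 = 2*r" by (rule evenE)
  have "2*p*n + w = s*k*(2*\<alpha>*p) + w*(2*p*u + 1)" using u by (simp add: algebra_simps)
  also have "\<dots> = s*k*e + w*(s*k*t + 2*p*u + 1)" using t by (simp add: algebra_simps)
  also have "\<dots> = s*k*e + 2*w*r" using r by simp
  finally have "(2*w) dvd (2*p*n + w - s*k*e)" by (metis add_diff_cancel_left' dvd_triv_left)
  moreover have "m - s*k*e = (2*p*n + w - s*k*e) - (2*p*n + w - m)" by simp
  ultimately have d: "(2*w) dvd (m - s*k*e)" using m(3) by (simp only:) (rule dvd_diff)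
  have se: "s*e = 1 \<or> s*e = -1" using s e by auto
  have eqk: "s*k*e = k*(s*e)" by (simp add: algebra_simps)
  have ske: "s*k*e = k \<or> s*k*e = -k" unfolding eqk using se by (elim disjE) simp_all
  show "\<bar>m\<bar> = k"
  proof (cases "s*k*e = -w")
    case True
    have "m - w = (m - s*k*e) - 2*w" using True by simp
    then have "(2*w) dvd (m - w)" using d by (metis dvd_diff dvd_refl)
    then have "m = w" using uniq2w[of w m w] m w by simp
    then show ?thesis using True ske k by (elim disjE; simp)
  next
    case False
    have r: "-w < s*k*e" "s*k*e \<le> w" using ske k False by (elim disjE; linarith)+
    have "m = s*k*e" by (rule uniq2w[OF m(1,2) r d])
    then have "m = k \<or> m = -k" using ske by metis
    then show ?thesis using k by arith
  qed
qed

lemma capV_eq: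
  assumes "p + q > 0"
  shows "capacity_V p q n = \<bar>real_of_int (omega p q) * rep2 (of_int (4 * int p * n) / of_int (omega p q))\<bar>"
proof -
  have z: "(SOME z. z \<in> vline n) \<in> vline n" by (rule someI[of _ "(of_int n, 0)"]) (simp add: vline_def)
  then have "fst (SOME z. z \<in> vline n) = of_int n" by (auto simp: vline_def)
  then show ?thesis unfolding capacity_V_def Let_def F_V_def PP_def omega_def by simp
qed

lemma capH_eq:
  assumes "p + q > 0"
  shows "capacity_H p q n = \<bar>real_of_int (omega p q) * rep2 (of_int (4 * int p * n) / of_int (omega p q))\<bar>"
proof -
  have z: "(SOME z. z \<in> hline n) \<in> hline n" by (rule someI[of _ "(0, of_int n)"]) (simp add: hline_def)
  then have "snd (SOME z. z \<in> hline n) = of_int n" by (auto simp: hline_def)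
  then show ?thesis unfolding capacity_H_def Let_def F_H_def PP_def omega_def by simp
qed

lemma massP_eq:
  assumes "p + q > 0"
  shows "mass_P p q n = \<bar>real_of_int (omega p q) * rep2 (of_int (2 * int p * n + omega p q) / of_int (omega p q))\<bar>"
proof -
  have z: "(SOME z. z \<in> pline p q n) \<in> pline p q n" by (rule someI[of _ "(0, of_int n)"]) (simp add: pline_def)
  then have s: "snd (SOME z. z \<in> pline p q n) = of_int n - PP p q * fst (SOME z. z \<in> pline p q n)" by (auto simp: pline_def)
  have D: "real p + real q \<noteq> 0" using assms by linarith
  have e: "PP p q * of_int n + 1 = of_int (2 * int p * n + omega p q) / of_int (omega p q)"
    using D by (simp add: PP_def omega_def field_simps)
  have "PP p q * (of_int n - PP p q * x) + (PP p q)\<^sup>2 * x + 1 = of_int (2 * int p * n + omega p q) / of_int (omega p q)" for x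
    unfolding e[symmetric] by (simp add: algebra_simps power2_eq_square)
  then show ?thesis unfolding mass_P_def Let_def F_P_def s by simp
qed

lemma massQ_eq:
  assumes "p + q > 0"
  shows "mass_Q p q n = \<bar>real_of_int (omega p q) * rep2 (of_int (2 * int p * n + omega p q) / of_int (omega p q))\<bar>"
proof -
  have z: "(SOME z. z \<in> qline p q n) \<in> qline p q n" by (rule someI[of _ "(0, of_int n)"]) (simp add: qline_def)
  then have s: "snd (SOME z. z \<in> qline p q n) = of_int n - QQ p q * fst (SOME z. z \<in> qline p q n)" by (auto simp: qline_def)
  have D: "real p + real q \<noteq> 0" using assms by linarith
  have e: "PP p q * of_int n + 1 = of_int (2 * int p * n + omega p q) / of_int (omega p q)"
    using D by (simp add: PP_def omega_def field_simps)
  have "PP p q * (of_int n - QQ p q * x) + PP p q * QQ p q * x + 1 = of_int (2 * int p * n + omega p q) / of_int (omega p q)" for x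
    unfolding e[symmetric] by (simp add: algebra_simps)
  then show ?thesis unfolding mass_Q_def Let_def F_Q_def s by simp
qed

theorem lemma2p2:
  fixes p q :: nat and \<alpha> :: int
  assumes "even_rational_param p q"
    and "0 < \<alpha>" and "2 * \<alpha> < omega p q"
    and "[2 * \<alpha> * int p = 1] (mod omega p q) \<or> [2 * \<alpha> * int p = -1] (mod omega p q)"
  shows "(\<forall>k::int. 0 \<le> k \<and> k \<le> (omega p q - 1) div 2 \<longrightarrow>
            (\<forall>n::int. capacity_V p q n = of_int (2 * k) \<longleftrightarrow>
               [n = k * \<alpha>] (mod omega p q) \<or> [n = omega p q - k * \<alpha>] (mod omega p q)) \<and>
            (\<forall>n::int. capacity_H p q n = of_int (2 * k) \<longleftrightarrow>
               [n = k * \<alpha>] (mod omega p q) \<or> [n = omega p q - k * \<alpha>] (mod omega p q)))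
       \<and> (\<forall>k::int. odd k \<and> 1 \<le> k \<and> k \<le> omega p q \<longrightarrow>
            (\<forall>n::int. mass_P p q n = of_int k \<longleftrightarrow>
               [n = k * \<alpha>] (mod omega p q) \<or> [n = omega p q - k * \<alpha>] (mod omega p q)) \<and>
            (\<forall>n::int. mass_Q p q n = of_int k \<longleftrightarrow>
               [n = k * \<alpha>] (mod omega p q) \<or> [n = omega p q - k * \<alpha>] (mod omega p q)))"
proof -
  define w where "w = omega p q"
  have pq: "0 < p" "p < q" "coprime p q" "even (p*q)" using assms(1) unfolding even_rational_param_def by auto
  have pos: "p + q > 0" using pq by simp
  have w0: "w > 0" unfolding w_def omega_def using pq by simp
  have wodd: "odd w"
  proof
    assume ev: "even w"
    have "even p \<or> even q" using pq(4) by auto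
    moreover have "even (p + q)" using ev unfolding w_def omega_def by (metis even_of_nat of_nat_add)
    ultimately have "even p \<and> even q" by auto
    then have "is_unit (2::nat)" using pq(3) coprime_common_divisor by blast
    then show False by simp
  qed
  obtain e t where et: "2*\<alpha>*int p = e + w*t" "e = 1 \<or> e = -1"
  proof -
    from assms(4) show thesis
    proof
      assume "[2 * \<alpha> * int p = 1] (mod omega p q)"
      then obtain t where "2 * \<alpha> * int p - 1 = w * t" unfolding w_def cong_iff_dvd_diff by auto
      then show thesis using that[of 1 t] by simp
    next
      assume "[2 * \<alpha> * int p = -1] (mod omega p q)"
      then obtain t where "2 * \<alpha> * int p - (-1) = w * t" unfolding w_def cong_iff_dvd_diff by auto
      then show thesis using that[of "-1" t] by simp
    qed
  qed
  have cg: "([n = k * \<alpha>] (mod w) \<or> [n = w - k * \<alpha>] (mod w)) \<longleftrightarrow> w dvd (n - k*\<alpha>) \<or> w dvd (n - (w - k*\<alpha>))" for n k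
    by (simp add: cong_iff_dvd_diff)
  have C: "(capacity_V p q n = of_int (2 * k) \<longleftrightarrow> [n = k * \<alpha>] (mod w) \<or> [n = w - k * \<alpha>] (mod w)) \<and>
           (capacity_H p q n = of_int (2 * k) \<longleftrightarrow> [n = k * \<alpha>] (mod w) \<or> [n = w - k * \<alpha>] (mod w))"
    if k: "0 \<le> k" "k \<le> (w - 1) div 2" for k n
  proof -
    obtain m where m: "real_of_int w * rep2 (of_int (4 * int p * n) / of_int w) = of_int m" "-w < m" "m \<le> w" "(2*w) dvd (4 * int p * n - m)"
      using rep2_int[OF w0] by blast
    have k2: "2*k < w" using k by linarith
    have eq: "capacity_V p q n = of_int \<bar>m\<bar>" "capacity_H p q n = of_int \<bar>m\<bar>"
      using capV_eq[OF pos, of n] capH_eq[OF pos, of n] m(1) unfolding w_def by simp_all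
    have "\<bar>m\<bar> = 2*k \<longleftrightarrow> w dvd (n - k*\<alpha>) \<or> w dvd (n - (w - k*\<alpha>))"
      by (rule capA[OF w0 et(1) et(2) k(1) k2 m(2,3,4)])
    then show ?thesis unfolding eq cg by (simp only: of_int_eq_iff)
  qed
  have M: "(mass_P p q n = of_int k \<longleftrightarrow> [n = k * \<alpha>] (mod w) \<or> [n = w - k * \<alpha>] (mod w)) \<and>
           (mass_Q p q n = of_int k \<longleftrightarrow> [n = k * \<alpha>] (mod w) \<or> [n = w - k * \<alpha>] (mod w))"
    if k: "odd k" "1 \<le> k" "k \<le> w" for k n
  proof -
    obtain m where m: "real_of_int w * rep2 (of_int (2 * int p * n + w) / of_int w) = of_int m" "-w < m" "m \<le> w" "(2*w) dvd (2 * int p * n + w - m)"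
      using rep2_int[OF w0] by blast
    have eq: "mass_P p q n = of_int \<bar>m\<bar>" "mass_Q p q n = of_int \<bar>m\<bar>"
      using massP_eq[OF pos, of n] massQ_eq[OF pos, of n] m(1) unfolding w_def by simp_all
    have "\<bar>m\<bar> = k \<longleftrightarrow> w dvd (n - k*\<alpha>) \<or> w dvd (n - (w - k*\<alpha>))"
      by (rule massA[OF w0 wodd et(1) et(2) k m(2,3,4)])
    then show ?thesis unfolding eq cg by (simp only: of_int_eq_iff)
  qed
  show ?thesis unfolding w_def[symmetric]
    apply (intro conjI allI impI)
    subgoal for k n using C[of k n] by (elim conjE) (rule conjunct1)
    subgoal for k n using C[of k n] by (elim conjE) (rule conjunct2)
    subgoal for k n using M[of k n] by (elim conjE) (rule conjunct1)
    subgoal for k n using M[of k n] by (elim conjE) (rule conjunct2)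
    done
qed

end
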